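(* Let $A\in\mathbb{R}^{n\times n}$, $B\in\mathbb{R}^{n\times m}$, let $N\geq n+m$, and for $i=1,\dots,N$ let $x_{i,1},x_{i,2}\in\mathbb{R}^{n}$, $u_{i,1}\in\mathbb{R}^{m}$ satisfy $x_{i,2}=Ax_{i,1}+Bu_{i,1}$. Put $X_{N,1}:=(x_{1,1},\dots,x_{N,1})^{\top}\in\mathbb{R}^{N\times n}$, $X_{N,2}:=(x_{1,2},\dots,x_{N,2})^{\top}\in\mathbb{R}^{N\times n}$, $U_{N,1}:=(u_{1,1},\dots,u_{N,1})^{\top}\in\mathbb{R}^{N\times m}$. Suppose $\operatorname{rank}\begin{pmatrix}X_{N,1} & U_{N,1}\end{pmatrix}=n+m$. Then the matrix equation $$X_{N,2}X_{N,1}^{\top}=X_{N,1}Z_{N,2}^{\top}+U_{N,1}Z_{B_{N,1}}$$ in the unknowns $(Z_{N,2},Z_{B_{N,1}})\in\mathbb{R}^{N\times n}\times\mathbb{R}^{m\times N}$ has a unique solution, namely $Z_{N,2}=X_{N,1}A$ and $Z_{B_{N,1}}=B^{\top}X_{N,1}^{\top}$. *)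

theory Defs
  imports "HOL-Analysis.Analysis"
begin

definition hconcat :: "'a^'n^'N \<Rightarrow> 'a^'m^'N \<Rightarrow> 'a^('n + 'm)^'N" where
  "hconcat X U = (\<chi> i k. case k of Inl j \<Rightarrow> X $ i $ j | Inr j \<Rightarrow> U $ i $ j)"

definition data_mat :: "('N \<Rightarrow> 'a^'n) \<Rightarrow> 'a^'n^'N" where
  "data_mat v = (\<chi> i j. v i $ j)"

end

theory Submission
  imports Defs
begin

lemma hconcat_mul:
  fixes X :: "real^'n^'N" and U :: "real^'m^'N" and D1 :: "real^'K^'n" and D2 :: "real^'K^'m"
  shows "hconcat X U ** (\<chi> j k. case j of Inl a \<Rightarrow> D1$a$k | Inr b \<Rightarrow> D2$b$k) = X ** D1 + U ** D2"
proof -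
  have "\<And>(g::'n+'m \<Rightarrow> real). sum g UNIV = sum (g \<circ> Inl) UNIV + sum (g \<circ> Inr) UNIV"
    by (metis UNIV_Plus_UNIV finite_class.finite_UNIV sum.Plus)
  then show ?thesis
    by (simp add: matrix_matrix_mult_def hconcat_def vec_eq_iff o_def)
qed

lemma mat_sub_ldistrib: "(A::real^'b^'a) ** (B - C) = A ** B - A ** C"
  by (metis diff_add_cancel add_diff_cancel matrix_add_ldistrib)

lemma mat_add_rdistrib: "((A::real^'b^'a) + B) ** C = A ** C + B ** C"
  by (simp add: vec_eq_iff matrix_matrix_mult_def sum.distrib algebra_simps)

lemma mat_rzero: "(A::real^'b^'a) ** (0::real^'c^'b) = 0"
  by (simp add: matrix_matrix_mult_def vec_eq_iff)

lemma ag_eq: "((a::'a::ab_group_add) + b = c + d) = ((c - a) + (d - b) = 0)"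
proof -
  have "(c - a) + (d - b) = (c + d) - (a + b)" by (simp add: algebra_simps)
  then show ?thesis by (metis eq_iff_diff_eq_0)
qed

lemma key:
  fixes X :: "real^'n^'N" and U :: "real^'m^'N" and D1 :: "real^'K^'n" and D2 :: "real^'K^'m"
  assumes r: "rank (hconcat X U) = CARD('n) + CARD('m)"
    and e: "X ** D1 + U ** D2 = 0"
  shows "D1 = 0 \<and> D2 = 0"
proof -
  have "rank (hconcat X U) = CARD('n + 'm)" using r
    by (metis UNIV_Plus_UNIV card_Plus finite_class.finite_UNIV)
  then have "inj ((*v) (hconcat X U))" by (rule full_rank_injective[THEN iffD1])
  then obtain L where L: "L ** hconcat X U = mat 1"
    using matrix_left_invertible_injective by blast
  define S :: "real^'K^('n+'m)" where "S = (\<chi> j k. case j of Inl a \<Rightarrow> D1$a$k | Inr b \<Rightarrow> D2$b$k)"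
  have "hconcat X U ** S = X ** D1 + U ** D2" unfolding S_def by (rule hconcat_mul)
  then have "hconcat X U ** S = 0" using e by (rule trans)
  then have "L ** (hconcat X U ** S) = 0" by simp
  then have "S = 0" by (simp add: matrix_mul_assoc L matrix_mul_lid)
  then have S0: "\<And>j k. S $ j $ k = 0" by simp
  have "D1$a$k = 0" for a k using S0[of "Inl a" k] by (simp add: S_def)
  moreover have "D2$b$k = 0" for b k using S0[of "Inr b" k] by (simp add: S_def)
  ultimately have "\<forall>a k. D1$a$k = 0" "\<forall>b k. D2$b$k = 0" by auto
  then show ?thesis by (simp add: vec_eq_iff)
qed

theorem lemma2:
  fixes A :: "real^'n^'n" and B :: "real^'m^'n"
    and x1 x2 :: "'N::finite \<Rightarrow> real^'n" and u1 :: "'N \<Rightarrow> real^'m"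
  assumes "CARD('N) \<ge> CARD('n) + CARD('m)"
    and "\<And>i. x2 i = A *v x1 i + B *v u1 i"
    and "rank (hconcat (data_mat x1) (data_mat u1)) = CARD('n) + CARD('m)"
  shows "\<forall>(Z2 :: real^'n^'N) (ZB :: real^'N^'m).
            data_mat x2 ** transpose (data_mat x1)
              = data_mat x1 ** transpose Z2 + data_mat u1 ** ZB
            \<longleftrightarrow> Z2 = data_mat x1 ** A \<and> ZB = transpose B ** transpose (data_mat x1)"
proof (intro allI)
  fix Z2 :: "real^'n^'N" and ZB :: "real^'N^'m"
  define X where "X = data_mat x1"
  define U where "U = data_mat u1"
  have X2: "data_mat x2 = X ** transpose A + U ** transpose B"
    unfolding X_def U_def data_mat_def using assms(2)
    by (simp add: vec_eq_iff matrix_matrix_mult_def matrix_vector_mult_def transpose_def mult.commute)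
  have E: "data_mat x2 ** transpose X = X ** (transpose A ** transpose X) + U ** (transpose B ** transpose X)"
    unfolding X2 by (simp add: mat_add_rdistrib matrix_mul_assoc)
  have "(data_mat x2 ** transpose X = X ** transpose Z2 + U ** ZB) \<longleftrightarrow>
        X ** (transpose Z2 - transpose A ** transpose X) + U ** (ZB - transpose B ** transpose X) = 0"
    unfolding E mat_sub_ldistrib by (rule ag_eq)
  also have "\<dots> \<longleftrightarrow> transpose Z2 - transpose A ** transpose X = 0 \<and> ZB - transpose B ** transpose X = 0"
  proof
    assume "X ** (transpose Z2 - transpose A ** transpose X) + U ** (ZB - transpose B ** transpose X) = 0"
    then show "transpose Z2 - transpose A ** transpose X = 0 \<and> ZB - transpose B ** transpose X = 0"
      by (rule key[OF assms(3)[folded X_def U_def]])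
  next
    assume "transpose Z2 - transpose A ** transpose X = 0 \<and> ZB - transpose B ** transpose X = 0"
    then show "X ** (transpose Z2 - transpose A ** transpose X) + U ** (ZB - transpose B ** transpose X) = 0"
      by (simp only: mat_rzero add_0)
  qed
  also have "\<dots> \<longleftrightarrow> Z2 = X ** A \<and> ZB = transpose B ** transpose X"
    by (metis eq_iff_diff_eq_0 matrix_transpose_mul transpose_transpose)
  finally show "data_mat x2 ** transpose (data_mat x1)
              = data_mat x1 ** transpose Z2 + data_mat u1 ** ZB
            \<longleftrightarrow> Z2 = data_mat x1 ** A \<and> ZB = transpose B ** transpose (data_mat x1)"
    unfolding X_def U_def .
qed

end
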